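(* Let $d\ge 3$ be an odd integer, let $\omega=e^{2\pi i/d}$, $\tau=-e^{\pi i/d}$, and let $X,Z$ be the operators on $\mathbb{C}^d$ (basis $\{|r\rangle : r\in\mathbb{Z}/d\mathbb{Z}\}$) given by $Z|r\rangle=\omega^r|r\rangle$, $X|r\rangle=|r+1\rangle$, with displacement operators $D_{j,k}=\tau^{jk}X^jZ^k$. Let $x_0=-2-\sqrt{d+1}$ (with $\sqrt{d+1}>0$), let $\sqrt{x_0}$ be a purely imaginary square root of $x_0$, and let $|\Psi\rangle=N(\sqrt{x_0},v_1,\dots,v_{d-1})^{\mathrm T}$, where $|v_j|=1$ and $v_{-j}=-v_j^*$ for all $j\neq 0$ (indices mod $d$), and $N^2=1/(d-1-x_0)$. Denote by $\psi_r$ the components of $|\Psi\rangle$. Then for every $j\not\equiv 0 \pmod d$, $$\sqrt{d+1}\,\langle\Psi|X^{-2j}|\Psi\rangle=\frac{\psi_j^2}{|\psi_j|^2}\quad\Longleftrightarrow\quad \sum_{k=1}^{d-1}\langle\Psi|D_{-2j,k}|\Psi\rangle=-\sqrt{d+1}\,\langle\Psi|X^{-2j}|\Psi\rangle .$$ Consequently, the first identity holds for all $j\not\equiv0$ if and only if $\sum_{k=1}^{d-1}\langle\Psi|D_{j,k}|\Psi\rangle=-\sqrt{d+1}\,\langle\Psi|X^{j}|\Psi\rangle$ holds for all $j\not\equiv 0$.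
   Context: Indices of vector components and of $D_{j,k}$ are taken modulo $d$; $^*$ denotes complex conjugation. The identity $\sqrt{d+1}\langle\Psi|X^{-2j}|\Psi\rangle=\psi_j^2/|\psi_j|^2$ is called the $X$-overlap equation. *)

theory Defs
  imports Complex_Main
begin

text \<open>Vectors in C^d are functions int => complex, read at indices in {0..<d};
  all index arithmetic is reduced mod d.\<close>

definition omega :: "nat \<Rightarrow> complex" where
  "omega d = cis (2 * pi / real d)"

definition tau :: "nat \<Rightarrow> complex" where
  "tau d = - cis (pi / real d)"

text \<open>X|r> = |r+1>, hence (X^m psi)_s = psi_(s-m).\<close>
definition Xpow :: "nat \<Rightarrow> int \<Rightarrow> (int \<Rightarrow> complex) \<Rightarrow> (int \<Rightarrow> complex)" where
  "Xpow d m \<psi> = (\<lambda>s. \<psi> ((s - m) mod int d))"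

definition Zpow :: "nat \<Rightarrow> int \<Rightarrow> (int \<Rightarrow> complex) \<Rightarrow> (int \<Rightarrow> complex)" where
  "Zpow d k \<psi> = (\<lambda>s. omega d powi ((s mod int d) * k) * \<psi> (s mod int d))"

definition Dop :: "nat \<Rightarrow> int \<Rightarrow> int \<Rightarrow> (int \<Rightarrow> complex) \<Rightarrow> (int \<Rightarrow> complex)" where
  "Dop d j k \<psi> = (\<lambda>s. tau d powi (j * k) * Xpow d j (Zpow d k \<psi>) s)"

definition braket :: "nat \<Rightarrow> (int \<Rightarrow> complex) \<Rightarrow> (int \<Rightarrow> complex) \<Rightarrow> complex" where
  "braket d \<phi> \<psi> = (\<Sum>s\<in>{0..<int d}. cnj (\<phi> s) * \<psi> s)"

definition Psi :: "nat \<Rightarrow> real \<Rightarrow> complex \<Rightarrow> (int \<Rightarrow> complex) \<Rightarrow> int \<Rightarrow> complex" where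
  "Psi d N s0 v r = complex_of_real N * (if r mod int d = 0 then s0 else v (r mod int d))"

end

theory Submission
  imports Defs
begin

lemma omega_nz: "omega d \<noteq> 0" by (simp add: omega_def)

lemma omega_powi: "omega d powi n = cis (2 * pi * real_of_int n / real d)"
  by (simp add: omega_def cis_power_int mult_ac)

lemma omega_powi_eq1:
  assumes "d > 0" shows "omega d powi n = 1 \<longleftrightarrow> int d dvd n"
proof
  assume h: "omega d powi n = 1"
  hence "cos (2 * pi * real_of_int n / real d) = 1"
    by (metis omega_powi cis.sel(1) one_complex.sel(1))
  then obtain x where x: "2 * pi * real_of_int n / real d = real_of_int x * 2 * pi"
    using cos_one_2pi_int by blast
  hence "real_of_int n = real_of_int x * real d" using assms by (simp add: field_simps)
  hence "n = x * int d" by (metis of_int_eq_iff of_int_mult of_int_of_nat_eq)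
  thus "int d dvd n" by simp
next
  assume "int d dvd n"
  then obtain x where "n = int d * x" by auto
  have "omega d powi int d = 1" using assms by (simp add: omega_def DeMoivre)
  thus "omega d powi n = 1" using \<open>n = int d * x\<close> by (simp add: power_int_mult)
qed

lemma root_sum:
  assumes "d > 0"
  shows "(\<Sum>k\<in>{0..<int d}. omega d powi (k * n)) = (if int d dvd n then of_nat d else 0)"
proof -
  define z where "z = omega d powi n"
  have "(\<Sum>k\<in>{0..<int d}. omega d powi (k * n)) = (\<Sum>k\<in>int ` {0..<d}. z powi k)"
  proof -
    have "(\<Sum>k\<in>{0..<int d}. omega d powi (k * n)) = (\<Sum>k\<in>{0..<int d}. z powi k)"
      by (rule sum.cong) (auto simp: z_def mult.commute[of _ n] power_int_mult)
    moreover have "{0..<int d} = int ` {0..<d}" by (simp add: image_int_atLeastLessThan)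
    ultimately show ?thesis by simp
  qed
  also have "\<dots> = (\<Sum>k<d. z ^ k)"
    by (subst sum.reindex) (auto simp: atLeast0LessThan)
  finally have e: "(\<Sum>k\<in>{0..<int d}. omega d powi (k * n)) = (\<Sum>k<d. z ^ k)" .
  have zd: "z ^ d = 1"
  proof -
    have "z ^ d = z powi int d" by simp
    also have "\<dots> = omega d powi (n * int d)" by (simp add: z_def power_int_mult)
    also have "\<dots> = 1" using omega_powi_eq1[OF assms] by simp
    finally show ?thesis .
  qed
  show ?thesis
  proof (cases "int d dvd n")
    case True
    hence "z = 1" using omega_powi_eq1[OF assms] z_def by simp
    thus ?thesis using e True by simp
  next
    case False
    hence "z \<noteq> 1" using omega_powi_eq1[OF assms] z_def by simp
    thus ?thesis using e False zd by (simp add: geometric_sum)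
  qed
qed

lemma tau_eq:
  assumes "2 * h = int d + 1" "d > 0"
  shows "tau d = omega d powi h"
proof -
  have "omega d powi h = cis (2 * pi * real_of_int h / real d)" by (rule omega_powi)
  also have "2 * pi * real_of_int h / real d = pi + pi / real d"
  proof -
    have "2 * real_of_int h = real d + 1" using assms(1) by (metis of_int_add of_int_mult of_int_numeral of_int_of_nat_eq of_int_1)
    thus ?thesis using assms(2) by (simp add: field_simps)
  qed
  also have "cis (pi + pi / real d) = - cis (pi / real d)" by (simp add: cis_mult[symmetric] cis_pi)
  finally show ?thesis by (simp add: tau_def)
qed

lemma dop_eq:
  assumes "2 * h = int d + 1" "d > 0" and per: "\<And>x. \<psi> (x mod int d) = \<psi> x"
  shows "Dop d m k \<psi> s = omega d powi ((h * m + (s - m) mod int d) * k) * \<psi> ((s - m) mod int d)"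
proof -
  have "tau d powi (m * k) = omega d powi (h * m * k)"
    using tau_eq[OF assms(1,2)] by (simp add: power_int_mult mult.assoc)
  thus ?thesis
    by (simp add: Dop_def Xpow_def Zpow_def per power_int_add omega_nz distrib_right mult.assoc)
qed

lemma dop_sum:
  assumes "2 * h = int d + 1" "d > 0" and per: "\<And>x. \<psi> (x mod int d) = \<psi> x"
  shows "(\<Sum>k=1..int d - 1. braket d \<psi> (Dop d m k \<psi>))
     = of_nat d * cnj (\<psi> (m * h)) * \<psi> (- (m * h)) - braket d \<psi> (Xpow d m \<psi>)"
proof -
  define r where "r = (\<lambda>s. (s - m) mod int d)"
  have "(\<Sum>k\<in>{0..<int d}. braket d \<psi> (Dop d m k \<psi>))
     = (\<Sum>k\<in>{0..<int d}. \<Sum>s\<in>{0..<int d}. cnj (\<psi> s) * \<psi> (r s) * omega d powi (k * (h * m + r s)))"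
    unfolding braket_def dop_eq[where \<psi>=\<psi>, OF assms] r_def by (intro sum.cong refl) (simp add: mult_ac)
  also have "\<dots> = (\<Sum>s\<in>{0..<int d}. cnj (\<psi> s) * \<psi> (r s) * (\<Sum>k\<in>{0..<int d}. omega d powi (k * (h * m + r s))))"
    by (subst sum.swap) (simp add: sum_distrib_left)
  also have "\<dots> = (\<Sum>s\<in>{0..<int d}. if int d dvd (h * m + r s) then cnj (\<psi> s) * \<psi> (r s) * of_nat d else 0)"
    by (intro sum.cong refl) (simp add: root_sum[OF assms(2)])
  also have "\<dots> = (\<Sum>s\<in>{x\<in>{0..<int d}. int d dvd (h * m + r x)}. cnj (\<psi> s) * \<psi> (r s) * of_nat d)"
    by (rule sum.inter_filter[symmetric]) simp
  also have "{x\<in>{0..<int d}. int d dvd (h * m + r x)} = {(m * h) mod int d}"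
  proof -
    have key: "int d dvd (h * m + r x) \<longleftrightarrow> x mod int d = (m * h) mod int d" for x
    proof -
      have "int d dvd (h * m + r x) \<longleftrightarrow> int d dvd (h * m + (x - m))"
        unfolding r_def by (simp only: dvd_eq_mod_eq_0 mod_add_right_eq)
      also have "h * m + (x - m) = (x - m * h) + m * (2 * h - 1)"
        by (simp add: algebra_simps)
      also have "\<dots> = (x - m * h) + m * int d" using assms(1) by simp
      also have "int d dvd \<dots> \<longleftrightarrow> int d dvd (x - m * h)" by (simp add: dvd_add_left_iff)
      also have "\<dots> \<longleftrightarrow> x mod int d = (m * h) mod int d" by (simp add: mod_eq_dvd_iff)
      finally show ?thesis .
    qed
    show ?thesis
    proof (rule set_eqI)
      fix x
      have a: "0 \<le> (m * h) mod int d" "(m * h) mod int d < int d" using assms(2) by simp_all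
      show "x \<in> {x\<in>{0..<int d}. int d dvd (h * m + r x)} \<longleftrightarrow> x \<in> {(m * h) mod int d}"
      proof
        assume "x \<in> {x\<in>{0..<int d}. int d dvd (h * m + r x)}"
        hence "0 \<le> x" "x < int d" "x mod int d = (m * h) mod int d" using key[of x] by auto
        thus "x \<in> {(m * h) mod int d}" by (metis mod_pos_pos_trivial singletonI)
      next
        assume "x \<in> {(m * h) mod int d}"
        hence x: "x = (m * h) mod int d" by simp
        have "x mod int d = (m * h) mod int d" unfolding x by simp
        thus "x \<in> {x\<in>{0..<int d}. int d dvd (h * m + r x)}" using key[of x] a x by simp
      qed
    qed
  qed
  also have "(\<Sum>s\<in>{(m * h) mod int d}. cnj (\<psi> s) * \<psi> (r s) * of_nat d) = of_nat d * cnj (\<psi> (m * h)) * \<psi> (- (m * h))"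
  proof -
    have "\<psi> (r ((m * h) mod int d)) = \<psi> (- (m * h))"
    proof -
      have "r ((m * h) mod int d) = (m * h - m) mod int d" unfolding r_def by (simp add: mod_diff_left_eq)
      also have "m * h - m = - (m * h) + m * (2 * h - 1)" by (simp add: algebra_simps)
      also have "\<dots> = - (m * h) + m * int d" using assms(1) by simp
      finally show ?thesis using per by (metis mod_mult_self1 mult.commute)
    qed
    thus ?thesis using per by simp
  qed
  finally have full: "(\<Sum>k\<in>{0..<int d}. braket d \<psi> (Dop d m k \<psi>)) = of_nat d * cnj (\<psi> (m * h)) * \<psi> (- (m * h))" .
  have d0: "Dop d m 0 \<psi> = Xpow d m \<psi>"
    by (rule ext) (simp add: Dop_def Xpow_def Zpow_def per)
  have "{0..<int d} = insert 0 {1..int d - 1}" using assms(2) by auto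
  hence "(\<Sum>k\<in>{0..<int d}. braket d \<psi> (Dop d m k \<psi>)) = braket d \<psi> (Xpow d m \<psi>) + (\<Sum>k=1..int d - 1. braket d \<psi> (Dop d m k \<psi>))"
    by (simp add: d0)
  thus ?thesis using full by (simp add: algebra_simps)
qed

lemma alg_iff:
  fixes S K c a :: complex
  assumes "S \<noteq> 0" "S - 1 \<noteq> 0" "K * S = S - 1"
  shows "(- K * c - a = - S * a) \<longleftrightarrow> (S * a = c)"
proof -
  have "(- K * c - a = - S * a) \<longleftrightarrow> (S - 1) * a = K * c"
    by (auto simp: algebra_simps)
  also have "\<dots> \<longleftrightarrow> S * ((S - 1) * a) = S * (K * c)" using assms(1) by simp
  also have "S * (K * c) = (S - 1) * c" using assms(3) by (simp add: mult.commute mult.left_commute)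
  also have "S * ((S - 1) * a) = (S - 1) * (S * a)" by (simp add: mult.commute mult.left_commute)
  also have "((S - 1) * (S * a) = (S - 1) * c) \<longleftrightarrow> S * a = c" using assms(2) by simp
  finally show ?thesis .
qed
lemma e1: "2 * h = int d + 1 \<Longrightarrow> -2 * j * h = - j + (- j) * int d"
proof -
  assume h2: "2 * h = int d + 1"
  have "-2 * j * h = - j * (2 * h)" by simp
  also have "\<dots> = - j * (int d + 1)" using h2 by simp
  finally show ?thesis by (simp add: algebra_simps)
qed
lemma e2: "2 * h = int d + 1 \<Longrightarrow> -2 * (- m * h) = m + m * int d"
proof -
  assume h2: "2 * h = int d + 1"
  have "-2 * (- m * h) = m * (2 * h)" by simp
  also have "\<dots> = m * (int d + 1)" using h2 by simp
  finally show ?thesis by (simp add: algebra_simps)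
qed

theorem proposition1:
  fixes d :: nat and x0 N :: real and s0 :: complex and v :: "int \<Rightarrow> complex"
  assumes "odd d" and "d \<ge> 3"
    and "x0 = -2 - sqrt (real d + 1)"
    and "s0\<^sup>2 = complex_of_real x0" and "Re s0 = 0"
    and "\<And>j. j mod int d \<noteq> 0 \<Longrightarrow> cmod (v (j mod int d)) = 1"
    and "\<And>j. j mod int d \<noteq> 0 \<Longrightarrow> v ((- j) mod int d) = - cnj (v (j mod int d))"
    and "N\<^sup>2 = 1 / (real d - 1 - x0)"
  shows "(\<forall>j::int. j mod int d \<noteq> 0 \<longrightarrow>
           ((complex_of_real (sqrt (real d + 1)) * braket d (Psi d N s0 v) (Xpow d (-2 * j) (Psi d N s0 v))
               = (Psi d N s0 v j)\<^sup>2 / (complex_of_real (cmod (Psi d N s0 v j)))\<^sup>2)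
            \<longleftrightarrow>
            ((\<Sum>k=1..int d - 1. braket d (Psi d N s0 v) (Dop d (-2 * j) k (Psi d N s0 v)))
               = - complex_of_real (sqrt (real d + 1)) * braket d (Psi d N s0 v) (Xpow d (-2 * j) (Psi d N s0 v)))))
       \<and>
         ((\<forall>j::int. j mod int d \<noteq> 0 \<longrightarrow>
            complex_of_real (sqrt (real d + 1)) * braket d (Psi d N s0 v) (Xpow d (-2 * j) (Psi d N s0 v))
               = (Psi d N s0 v j)\<^sup>2 / (complex_of_real (cmod (Psi d N s0 v j)))\<^sup>2)
          \<longleftrightarrow>
          (\<forall>j::int. j mod int d \<noteq> 0 \<longrightarrow>
            (\<Sum>k=1..int d - 1. braket d (Psi d N s0 v) (Dop d j k (Psi d N s0 v)))
               = - complex_of_real (sqrt (real d + 1)) * braket d (Psi d N s0 v) (Xpow d j (Psi d N s0 v))))"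
proof -
  note A = assms
  define \<psi> where "\<psi> = Psi d N s0 v"
  define S where "S = sqrt (real d + 1)"
  define h where "h = (int d + 1) div 2"
  have d0: "d > 0" using A(2) by simp
  have h2: "2 * h = int d + 1" using A(1) unfolding h_def
    by (metis add.commute dvd_mult_div_cancel even_add even_of_nat odd_one)
  have per: "\<And>x. \<psi> (x mod int d) = \<psi> x" by (simp add: \<psi>_def Psi_def)
  have S1: "S > 1" unfolding S_def using A(2) by simp
  have S2: "S\<^sup>2 = real d + 1" unfolding S_def by simp
  have den: "real d - 1 - x0 = S * (S + 1)" using A(3) S2 unfolding S_def[symmetric] by (simp add: power2_eq_square algebra_simps)
  have pos: "S * (S + 1) > 0" using S1 by simp
  have N2: "N\<^sup>2 * (S * (S + 1)) = 1" using A(8) pos unfolding den by (simp add: field_simps)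
  have Nnz: "N \<noteq> 0" using N2 by auto
  have KS: "real d * N\<^sup>2 * S = S - 1"
  proof -
    have dd: "real d = (S - 1) * (S + 1)" using S2 by (simp add: power2_eq_square algebra_simps)
    have "real d * N\<^sup>2 * S = (S - 1) * (N\<^sup>2 * (S * (S + 1)))" unfolding dd by (simp add: algebra_simps)
    thus ?thesis using N2 by simp
  qed
  define Q where "Q m \<longleftrightarrow> (\<Sum>k=1..int d - 1. braket d \<psi> (Dop d m k \<psi>))
               = - complex_of_real S * braket d \<psi> (Xpow d m \<psi>)" for m
  define E where "E j \<longleftrightarrow> complex_of_real S * braket d \<psi> (Xpow d (-2 * j) \<psi>)
               = (\<psi> j)\<^sup>2 / (complex_of_real (cmod (\<psi> j)))\<^sup>2" for j
  have P1: "E j \<longleftrightarrow> Q (-2 * j)" if j: "j mod int d \<noteq> 0" for j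
  proof -
    define w where "w = v (j mod int d)"
    define a where "a = braket d \<psi> (Xpow d (-2 * j) \<psi>)"
    have w1: "cmod w = 1" using A(6)[OF j] w_def by simp
    have nj: "(- j) mod int d \<noteq> 0" using j by (simp add: zmod_zminus1_not_zero)
    have pj: "\<psi> j = of_real N * w" using j by (simp add: \<psi>_def Psi_def w_def)
    have pmj: "\<psi> (- j) = - of_real N * cnj w" using nj A(7)[OF j] by (simp add: \<psi>_def Psi_def w_def)
    have rhs: "(\<psi> j)\<^sup>2 / (complex_of_real (cmod (\<psi> j)))\<^sup>2 = w\<^sup>2"
    proof -
      have "cmod (\<psi> j) = \<bar>N\<bar>" using pj w1 by (simp add: norm_mult)
      hence "(complex_of_real (cmod (\<psi> j)))\<^sup>2 = of_real (N\<^sup>2)" by (metis of_real_power power2_abs)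
      thus ?thesis using pj Nnz by (simp add: power_mult_distrib)
    qed
    have e1: "-2 * j * h = - j + (- j) * int d" by (rule e1[OF h2])
    have "\<psi> (-2 * j * h) = \<psi> ((-2 * j * h) mod int d)" by (rule per[symmetric])
    also have "(-2 * j * h) mod int d = (- j) mod int d" unfolding e1 by (rule mod_mult_self1)
    also have "\<psi> \<dots> = \<psi> (- j)" by (rule per)
    finally have q1: "\<psi> (-2 * j * h) = \<psi> (- j)" .
    have "\<psi> (- (-2 * j * h)) = \<psi> (j + j * int d)" unfolding e1 by (simp add: add.commute)
    also have "\<dots> = \<psi> ((j + j * int d) mod int d)" by (rule per[symmetric])
    also have "(j + j * int d) mod int d = j mod int d" by (rule mod_mult_self1)
    also have "\<psi> \<dots> = \<psi> j" by (rule per)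
    finally have q2: "\<psi> (- (-2 * j * h)) = \<psi> j" .
    have sumeq: "(\<Sum>k=1..int d - 1. braket d \<psi> (Dop d (-2 * j) k \<psi>))
       = of_nat d * cnj (\<psi> (- j)) * \<psi> j - a"
      using dop_sum[where \<psi>=\<psi>, OF h2 d0 per, of "-2 * j"] q1 q2 by (simp add: a_def)
    have cc: "cnj (\<psi> (- j)) * \<psi> j = - of_real (N\<^sup>2) * w\<^sup>2" using pmj pj by (simp add: power2_eq_square)
    define K where "K = complex_of_real (real d * N\<^sup>2)"
    have sumeq2: "(\<Sum>k=1..int d - 1. braket d \<psi> (Dop d (-2 * j) k \<psi>)) = - K * w\<^sup>2 - a"
      using sumeq cc by (simp add: K_def mult.assoc)
    have KS': "K * of_real S = of_real S - 1" unfolding K_def using KS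
      by (metis of_real_1 of_real_diff of_real_mult)
    have Snz: "complex_of_real S \<noteq> 0" "complex_of_real S - 1 \<noteq> 0" using S1 by (auto simp: complex_eq_iff)
    note alg_iff[OF Snz KS', of "w\<^sup>2" a]
    thus ?thesis unfolding E_def Q_def sumeq2 rhs a_def by auto
  qed
  have Qper: "Q m \<longleftrightarrow> Q m'" if "m mod int d = m' mod int d" for m m'
  proof -
    have x: "Xpow d m = Xpow d m'" unfolding Xpow_def using that by (metis mod_diff_right_eq)
    have "(m * h) mod int d = (m' * h) mod int d" using that by (metis mod_mult_left_eq)
    hence "\<psi> (m * h) = \<psi> (m' * h)" "\<psi> (- (m * h)) = \<psi> (- (m' * h))"
      by (metis per, metis per mod_minus_eq)
    thus ?thesis unfolding Q_def dop_sum[where \<psi>=\<psi>, OF h2 d0 per] x by simp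
  qed
  have part2: "(\<forall>j. j mod int d \<noteq> 0 \<longrightarrow> E j) \<longleftrightarrow> (\<forall>m. m mod int d \<noteq> 0 \<longrightarrow> Q m)"
  proof
    assume H: "\<forall>j. j mod int d \<noteq> 0 \<longrightarrow> E j"
    show "\<forall>m. m mod int d \<noteq> 0 \<longrightarrow> Q m"
    proof (intro allI impI)
      fix m assume m: "m mod int d \<noteq> 0"
      define j where "j = - m * h"
      have e: "-2 * j = m + m * int d" unfolding j_def by (rule e2[OF h2])
      have em: "(-2 * j) mod int d = m mod int d" unfolding e by (rule mod_mult_self1)
      have jn: "j mod int d \<noteq> 0"
      proof
        assume "j mod int d = 0"
        hence "(-2 * j) mod int d = 0" by (metis mod_mult_right_eq mult_zero_right mod_0)
        thus False using em m by simp
      qed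
      show "Q m" using H jn P1[OF jn] Qper[OF em] by simp
    qed
  next
    assume H: "\<forall>m. m mod int d \<noteq> 0 \<longrightarrow> Q m"
    show "\<forall>j. j mod int d \<noteq> 0 \<longrightarrow> E j"
    proof (intro allI impI)
      fix j assume j: "j mod int d \<noteq> 0"
      have "(-2 * j) mod int d \<noteq> 0"
      proof
        assume "(-2 * j) mod int d = 0"
        hence "int d dvd 2 * j" by (simp add: dvd_eq_mod_eq_0[symmetric])
        moreover have "coprime (int d) 2" using A(1) by (simp add: coprime_commute)
        ultimately have "int d dvd j" using coprime_dvd_mult_right_iff by blast
        thus False using j by simp
      qed
      thus "E j" using H P1[OF j] by simp
    qed
  qed
  show ?thesis
    using P1 part2 unfolding E_def Q_def \<psi>_def S_def by blast
qed

end
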